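(* Let $A(x)=\sum_{n\ge 0}|\mathfrak D^1_{2n}(4213)|\,x^n$ and $B(x)=\sum_{n\ge 0}|\mathfrak D^1_{2n}(1342)|\,x^n$ be the ordinary generating functions. Then $A(x)=\dfrac{1}{1-xB(x)}$.
   Context: A Dumont permutation of the first kind of length $2n$ is a permutation $\pi\in\mathfrak S_{2n}$ such that for every $i=1,\dots,2n$: if $\pi(i)$ is even then $i<2n$ and $\pi(i)>\pi(i+1)$; if $\pi(i)$ is odd then $i=2n$ or $\pi(i)<\pi(i+1)$. $\mathfrak D^1_{2n}$ denotes the set of these ($\mathfrak D^1_0$ consists of the empty permutation). A permutation $\sigma$ contains a pattern $\tau\in\mathfrak S_k$ if some subsequence $(\sigma(i_1),\dots,\sigma(i_k))$, $i_1<\dots<i_k$, is order-isomorphic to $\tau$; otherwise $\sigma$ avoids $\tau$. $\mathfrak D^1_{2n}(T)$ denotes the set of permutations in $\mathfrak D^1_{2n}$ avoiding every pattern in $T$. *)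

theory Defs
  imports "HOL-Computational_Algebra.Formal_Power_Series"
begin

text \<open>Permutations of {1..m} are represented as lists p of length m with
  set p = {1..m}; position i (0-based) holds the value pi(i+1).\<close>

definition is_perm :: "nat \<Rightarrow> nat list \<Rightarrow> bool" where
  "is_perm m p \<longleftrightarrow> length p = m \<and> distinct p \<and> set p = {1..m}"

definition dumont1_cond :: "nat list \<Rightarrow> bool" where
  "dumont1_cond p \<longleftrightarrow>
     (\<forall>i < length p.
        (even (p ! i) \<longrightarrow> i + 1 < length p \<and> p ! i > p ! (i + 1)) \<and>
        (odd (p ! i) \<longrightarrow> i + 1 = length p \<or> p ! i < p ! (i + 1)))"

definition contains_pattern :: "nat list \<Rightarrow> nat list \<Rightarrow> bool" where
  "contains_pattern \<sigma> \<tau> \<longleftrightarrow>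
     (\<exists>idx. length idx = length \<tau> \<and> sorted_wrt (<) idx \<and>
        (\<forall>j < length idx. idx ! j < length \<sigma>) \<and>
        (\<forall>a < length \<tau>. \<forall>b < length \<tau>.
            (\<sigma> ! (idx ! a) < \<sigma> ! (idx ! b) \<longleftrightarrow> \<tau> ! a < \<tau> ! b)))"

definition avoids :: "nat list \<Rightarrow> nat list \<Rightarrow> bool" where
  "avoids \<sigma> \<tau> \<longleftrightarrow> \<not> contains_pattern \<sigma> \<tau>"

definition dumont1_avoid :: "nat \<Rightarrow> nat list set \<Rightarrow> nat list set" where
  "dumont1_avoid n T =
     {p. is_perm (2 * n) p \<and> dumont1_cond p \<and> (\<forall>\<tau>\<in>T. avoids p \<tau>)}"

end

theory Submission
  imports Defs
begin


lemma all4: "(\<forall>a<(4::nat). P a) \<longleftrightarrow> P 0 \<and> P 1 \<and> P 2 \<and> P 3"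
  by (auto simp: less_Suc_eq numeral_eq_Suc)

lemma len4: "length xs = 4 \<Longrightarrow> \<exists>a b c d. xs = [a,b,c,d]"
  by (auto simp: numeral_eq_Suc length_Suc_conv)

lemma cp4_iff:
  assumes "length t = 4"
  shows "contains_pattern s t \<longleftrightarrow> (\<exists>i j k l. i<j \<and> j<k \<and> k<l \<and> l<length s \<and>
     (\<forall>a<4. \<forall>b<4. s!([i,j,k,l]!a) < s!([i,j,k,l]!b) \<longleftrightarrow> t!a < t!b))"
proof
  assume "contains_pattern s t"
  then obtain idx where h: "length idx = length t" "sorted_wrt (<) idx"
    "\<forall>j < length idx. idx ! j < length s"
    "\<forall>a < length t. \<forall>b < length t. (s ! (idx ! a) < s ! (idx ! b) \<longleftrightarrow> t ! a < t ! b)"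
    unfolding contains_pattern_def by blast
  from h(1) assms obtain i j k l where idx: "idx = [i,j,k,l]" using len4 by metis
  show "\<exists>i j k l. i<j \<and> j<k \<and> k<l \<and> l<length s \<and>
     (\<forall>a<4. \<forall>b<4. s!([i,j,k,l]!a) < s!([i,j,k,l]!b) \<longleftrightarrow> t!a < t!b)"
    apply (rule exI[of _ i], rule exI[of _ j], rule exI[of _ k], rule exI[of _ l])
    using h assms unfolding idx by (auto simp: all4 less_Suc_eq)
next
  assume "\<exists>i j k l. i<j \<and> j<k \<and> k<l \<and> l<length s \<and>
     (\<forall>a<4. \<forall>b<4. s!([i,j,k,l]!a) < s!([i,j,k,l]!b) \<longleftrightarrow> t!a < t!b)"
  then obtain i j k l where h: "i<j" "j<k" "k<l" "l<length s"
     "\<forall>a<4. \<forall>b<4. s!([i,j,k,l]!a) < s!([i,j,k,l]!b) \<longleftrightarrow> t!a < t!b" by blast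
  show "contains_pattern s t" unfolding contains_pattern_def
    apply (rule exI[of _ "[i,j,k,l]"])
    using h assms by (auto simp: all4 less_Suc_eq)
qed

lemma c4213: "contains_pattern s [4,2,1,3] \<longleftrightarrow>
  (\<exists>i j k l. i<j \<and> j<k \<and> k<l \<and> l<length s \<and> s!k < s!j \<and> s!j < s!l \<and> s!l < s!i)"
  apply (subst cp4_iff, simp)
  apply (simp add: all4)
  apply (rule iffI)
   apply (elim exE conjE; blast)
  apply (elim exE conjE, intro exI conjI, assumption, assumption, assumption, assumption)
  apply auto
  done

lemma c1342: "contains_pattern s [1,3,4,2] \<longleftrightarrow>
  (\<exists>i j k l. i<j \<and> j<k \<and> k<l \<and> l<length s \<and> s!i < s!l \<and> s!l < s!j \<and> s!j < s!k)"
  apply (subst cp4_iff, simp)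
  apply (simp add: all4)
  apply (rule iffI)
   apply (elim exE conjE; blast)
  apply (elim exE conjE, intro exI conjI, assumption, assumption, assumption, assumption)
  apply auto
  done

definition fm :: "nat \<Rightarrow> nat list \<Rightarrow> nat list \<Rightarrow> nat list" where
  "fm k g d = map (\<lambda>x. 2*k+3-x) g @ [2,1] @ map (\<lambda>x. x+2*k+2) d"

lemma fm_len[simp]: "length (fm k g d) = length g + 2 + length d"
  by (simp add: fm_def)

lemma fm_nth:
  assumes "length g = 2*k" "i < length g + 2 + length d"
  shows "fm k g d ! i = (if i<2*k then 2*k+3-g!i else if i=2*k then 2 else if i=2*k+1 then 1
           else d!(i-2*k-2)+2*k+2)"
proof -
  consider "i < 2*k" | "i = 2*k" | "i = 2*k+1" | "i \<ge> 2*k+2" by linarith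
  then show ?thesis
  proof cases
    case 4
    then have "i - 2*k = Suc (Suc (i-2*k-2))" by simp
    then show ?thesis using assms 4 by (simp add: fm_def nth_append)
  qed (use assms in \<open>auto simp: fm_def nth_append\<close>)
qed

lemma par_sub: "x \<le> 2*k \<Longrightarrow> even (2*k+3-x) \<longleftrightarrow> odd (x::nat)"
  by presburger

lemma fm_dumont:
  assumes g: "length g = 2*k" "\<forall>x\<in>set g. 1\<le>x \<and> x\<le>2*k" and d: "\<forall>x\<in>set d. 1 \<le> x"
  shows "dumont1_cond (fm k g d) \<longleftrightarrow> dumont1_cond g \<and> dumont1_cond d"
proof -
  let ?p = "fm k g d"
  have gi: "1 \<le> g!i \<and> g!i \<le> 2*k" if "i < 2*k" for i using g that nth_mem by metis
  have di: "1 \<le> d!i" if "i < length d" for i using d that nth_mem by metis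
  have pn: "?p ! i = (if i<2*k then 2*k+3-g!i else if i=2*k then 2 else if i=2*k+1 then 1
           else d!(i-2*k-2)+2*k+2)" if "i < 2*k + 2 + length d" for i
    using fm_nth[OF g(1)] that g(1) by simp
  show ?thesis
  proof
    assume D: "dumont1_cond ?p"
    have Di: "(even (?p ! i) \<longrightarrow> i + 1 < length ?p \<and> ?p ! i > ?p ! (i + 1)) \<and>
        (odd (?p ! i) \<longrightarrow> i + 1 = length ?p \<or> ?p ! i < ?p ! (i + 1))" if "i < length ?p" for i
      using D that unfolding dumont1_cond_def by blast
    have "dumont1_cond g" unfolding dumont1_cond_def
    proof (intro allI impI)
      fix i assume i: "i < length g"
      have A: "(even (?p ! i) \<longrightarrow> i + 1 < length ?p \<and> ?p ! i > ?p ! (i + 1)) \<and>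
        (odd (?p ! i) \<longrightarrow> i + 1 = length ?p \<or> ?p ! i < ?p ! (i + 1))" using Di[of i] i by simp
      have e1: "?p ! i = 2*k+3-g!i" using pn[of i] i g(1) by simp
      have e2: "?p ! (i+1) = (if i+1 < 2*k then 2*k+3-g!(i+1) else 2)" using pn[of "i+1"] i g(1) by simp
      have par: "even (?p ! i) \<longleftrightarrow> odd (g!i)" using e1 par_sub gi[of i] i g(1) by simp
      show "(even (g ! i) \<longrightarrow> i + 1 < length g \<and> g ! i > g ! (i + 1)) \<and>
        (odd (g ! i) \<longrightarrow> i + 1 = length g \<or> g ! i < g ! (i + 1))"
        using A e1 e2 par gi[of i] gi[of "i+1"] i g(1) by (auto split: if_splits)
    qed
    moreover have "dumont1_cond d" unfolding dumont1_cond_def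
    proof (intro allI impI)
      fix i assume i: "i < length d"
      have A: "(even (?p ! (i+2*k+2)) \<longrightarrow> i+2*k+2 + 1 < length ?p \<and> ?p ! (i+2*k+2) > ?p ! (i+2*k+2 + 1)) \<and>
        (odd (?p ! (i+2*k+2)) \<longrightarrow> i+2*k+2 + 1 = length ?p \<or> ?p ! (i+2*k+2) < ?p ! (i+2*k+2 + 1))"
        using Di[of "i+2*k+2"] i g(1) by simp
      have e1: "?p ! (i+2*k+2) = d!i+2*k+2" using pn[of "i+2*k+2"] i g(1) by simp
      have e2: "i+1 < length d \<Longrightarrow> ?p ! (i+2*k+2+1) = d!(i+1)+2*k+2" using pn[of "i+2*k+2+1"] i g(1) by (simp del: fm_len)
      show "(even (d ! i) \<longrightarrow> i + 1 < length d \<and> d ! i > d ! (i + 1)) \<and>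
        (odd (d ! i) \<longrightarrow> i + 1 = length d \<or> d ! i < d ! (i + 1))"
        using A e1 e2 i g(1) by (cases "i+1 < length d") auto
    qed
    ultimately show "dumont1_cond g \<and> dumont1_cond d" by blast
  next
    assume "dumont1_cond g \<and> dumont1_cond d"
    then have G: "\<And>i. i < length g \<Longrightarrow> (even (g ! i) \<longrightarrow> i + 1 < length g \<and> g ! i > g ! (i + 1)) \<and>
        (odd (g ! i) \<longrightarrow> i + 1 = length g \<or> g ! i < g ! (i + 1))"
      and Dd: "\<And>i. i < length d \<Longrightarrow> (even (d ! i) \<longrightarrow> i + 1 < length d \<and> d ! i > d ! (i + 1)) \<and>
        (odd (d ! i) \<longrightarrow> i + 1 = length d \<or> d ! i < d ! (i + 1))"
      unfolding dumont1_cond_def by blast+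
    show "dumont1_cond ?p" unfolding dumont1_cond_def
    proof (intro allI impI)
      fix i assume i: "i < length ?p"
      consider "i < 2*k" | "i = 2*k" | "i = 2*k+1" | "i \<ge> 2*k+2" by linarith
      then show "(even (?p ! i) \<longrightarrow> i + 1 < length ?p \<and> ?p ! i > ?p ! (i + 1)) \<and>
        (odd (?p ! i) \<longrightarrow> i + 1 = length ?p \<or> ?p ! i < ?p ! (i + 1))"
      proof cases
        case 1
        have e1: "?p ! i = 2*k+3-g!i" using pn[of i] 1 by simp
        have e2: "?p ! (i+1) = (if i+1 < 2*k then 2*k+3-g!(i+1) else 2)" using pn[of "i+1"] 1 by simp
        have par: "even (?p ! i) \<longleftrightarrow> odd (g!i)" using e1 par_sub gi[of i] 1 by simp
        show ?thesis using G[of i] e1 e2 par gi[of i] gi[of "i+1"] 1 g(1) by (auto split: if_splits)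
      next
        case 2
        then show ?thesis using pn[of i] pn[of "i+1"] g(1) by simp
      next
        case 3
        then show ?thesis using pn[of i] pn[of "i+1"] g(1) di[of 0] by (cases "d = []") auto
      next
        case 4
        define j where "j = i - (2*k+2)"
        have ij: "i = j + 2*k+2" "j < length d" using 4 i g(1) unfolding j_def by auto
        have e1: "?p ! i = d!j+2*k+2" using pn[of i] ij by simp
        have e2: "j+1 < length d \<Longrightarrow> ?p ! (i+1) = d!(j+1)+2*k+2" using pn[of "i+1"] ij by simp
        show ?thesis using Dd[of j] e1 e2 ij g(1) by (cases "j+1 < length d") auto
      qed
    qed
  qed
qed

lemma fm_pat:
  assumes g: "length g = 2*k" "\<forall>x\<in>set g. 1\<le>x \<and> x\<le>2*k" and d: "\<forall>x\<in>set d. 1 \<le> x"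
  shows "contains_pattern (fm k g d) [4,2,1,3] \<longleftrightarrow>
         contains_pattern g [1,3,4,2] \<or> contains_pattern d [4,2,1,3]"
proof -
  let ?p = "fm k g d"
  have gi: "1 \<le> g!i \<and> g!i \<le> 2*k" if "i < 2*k" for i using g that nth_mem by metis
  have di: "1 \<le> d!i" if "i < length d" for i using d that nth_mem by metis
  have pn: "?p ! i = (if i<2*k then 2*k+3-g!i else if i=2*k then 2 else if i=2*k+1 then 1
           else d!(i-2*k-2)+2*k+2)" if "i < 2*k + 2 + length d" for i
    using fm_nth[OF g(1)] that g(1) by simp
  have lo: "i < 2*k \<Longrightarrow> ?p ! i = 2*k+3-g!i \<and> 3 \<le> ?p ! i \<and> ?p ! i \<le> 2*k+2" for i
    using pn[of i] gi[of i] by auto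
  have hi: "2*k+2 \<le> i \<Longrightarrow> i < 2*k + 2 + length d \<Longrightarrow> ?p ! i = d!(i-2*k-2)+2*k+2 \<and> 2*k+3 \<le> ?p ! i" for i
    using pn[of i] di[of "i-2*k-2"] by auto
  have m0: "?p ! (2*k) = 2" "?p ! (2*k+1) = 1" using pn[of "2*k"] pn[of "2*k+1"] by auto
  show ?thesis
  proof
    assume "contains_pattern ?p [4,2,1,3]"
    then obtain i j q l where h: "i<j" "j<q" "q<l" "l<length ?p" "?p!q < ?p!j" "?p!j < ?p!l" "?p!l < ?p!i"
      unfolding c4213 by blast
    show "contains_pattern g [1,3,4,2] \<or> contains_pattern d [4,2,1,3]"
    proof (cases "i < 2*k+2")
      case True
      have "?p ! i \<le> 2*k+2"
      proof -
        consider "i < 2*k" | "i = 2*k" | "i = 2*k+1" using True by linarith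
        then show ?thesis using lo[of i] m0 by cases auto
      qed
      then have "l < 2*k+2"
      proof (rule_tac ccontr)
        assume "\<not> l < 2*k+2"
        then show False using hi[of l] h \<open>?p ! i \<le> 2*k+2\<close> g(1) by auto
      qed
      moreover have "l \<noteq> 2*k" "l \<noteq> 2*k+1"
        using h m0 lo[of q] by (auto)
      ultimately have l: "l < 2*k" by linarith
      then have "g!i < g!l \<and> g!l < g!j \<and> g!j < g!q"
        using h lo[of i] lo[of j] lo[of q] lo[of l] gi[of i] gi[of j] gi[of q] gi[of l] by (simp; arith)
      then have "contains_pattern g [1,3,4,2]" unfolding c1342 using h l g(1)
        by (intro exI[of _ i] exI[of _ j] exI[of _ q] exI[of _ l]) auto
      then show ?thesis by blast
    next
      case False
      define i' where "i' = i - (2*k+2)"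
      define j' where "j' = j - (2*k+2)"
      define q' where "q' = q - (2*k+2)"
      define l' where "l' = l - (2*k+2)"
      have "d!q' < d!j' \<and> d!j' < d!l' \<and> d!l' < d!i'"
        using h hi[of i] hi[of j] hi[of q] hi[of l] False g(1) unfolding i'_def j'_def q'_def l'_def by auto
      moreover have "i'<j' \<and> j'<q' \<and> q'<l' \<and> l'<length d"
        using h False g(1) unfolding i'_def j'_def q'_def l'_def by auto
      ultimately have "contains_pattern d [4,2,1,3]" unfolding c4213 by blast
      then show ?thesis by blast
    qed
  next
    assume "contains_pattern g [1,3,4,2] \<or> contains_pattern d [4,2,1,3]"
    then show "contains_pattern ?p [4,2,1,3]"
    proof
      assume "contains_pattern g [1,3,4,2]"
      then obtain i j q l where h: "i<j" "j<q" "q<l" "l<length g" "g!i < g!l" "g!l < g!j" "g!j < g!q"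
        unfolding c1342 by blast
      have "?p!q < ?p!j \<and> ?p!j < ?p!l \<and> ?p!l < ?p!i"
        using h lo[of i] lo[of j] lo[of q] lo[of l] gi[of i] gi[of j] gi[of q] gi[of l] g(1) by (simp; arith)
      then show ?thesis unfolding c4213 using h g(1)
        by (intro exI[of _ i] exI[of _ j] exI[of _ q] exI[of _ l]) auto
    next
      assume "contains_pattern d [4,2,1,3]"
      then obtain i j q l where h: "i<j" "j<q" "q<l" "l<length d" "d!q < d!j" "d!j < d!l" "d!l < d!i"
        unfolding c4213 by blast
      have "?p!(q+2*k+2) < ?p!(j+2*k+2) \<and> ?p!(j+2*k+2) < ?p!(l+2*k+2) \<and> ?p!(l+2*k+2) < ?p!(i+2*k+2)"
        using h hi[of "i+2*k+2"] hi[of "j+2*k+2"] hi[of "q+2*k+2"] hi[of "l+2*k+2"] by auto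
      then show ?thesis unfolding c4213 using h g(1)
        by (intro exI[of _ "i+2*k+2"] exI[of _ "j+2*k+2"] exI[of _ "q+2*k+2"] exI[of _ "l+2*k+2"]) auto
    qed
  qed
qed

lemma mem_av: "p \<in> dumont1_avoid n {t} \<longleftrightarrow> is_perm (2*n) p \<and> dumont1_cond p \<and> \<not> contains_pattern p t"
  by (simp add: dumont1_avoid_def avoids_def)

lemma perm_intro: "length xs = m \<Longrightarrow> distinct xs \<Longrightarrow> set xs \<subseteq> {1..m} \<Longrightarrow> is_perm m xs"
  unfolding is_perm_def using card_subset_eq[of "{1..m}" "set xs"] distinct_card[of xs] by auto

lemma fm_in:
  assumes "k \<le> n" "g \<in> dumont1_avoid k {[1,3,4,2]}" "d \<in> dumont1_avoid (n-k) {[4,2,1,3]}"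
  shows "fm k g d \<in> dumont1_avoid (Suc n) {[4,2,1,3]}"
proof -
  have g: "length g = 2*k" "distinct g" "set g = {1..2*k}" "dumont1_cond g" "\<not> contains_pattern g [1,3,4,2]"
    using assms(2) unfolding mem_av is_perm_def by auto
  have d: "length d = 2*(n-k)" "distinct d" "set d = {1..2*(n-k)}" "dumont1_cond d" "\<not> contains_pattern d [4,2,1,3]"
    using assms(3) unfolding mem_av is_perm_def by auto
  have gv: "\<forall>x\<in>set g. 1\<le>x \<and> x\<le>2*k" using g(3) by auto
  have dv: "\<forall>x\<in>set d. 1 \<le> x" using d(3) by auto
  have inj1: "inj_on (\<lambda>x. 2*k+3-x) (set g)"
  proof (rule inj_onI)
    fix x y assume h: "x \<in> set g" "y \<in> set g" "2*k+3-x = 2*k+3-y"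
    then have "x \<le> 2*k" "y \<le> 2*k" using gv by auto
    then show "x = y" using h(3) by arith
  qed
  have s1: "\<forall>y\<in>set (map (\<lambda>x. 2*k+3-x) g). 3 \<le> y \<and> y \<le> 2*k+2" using gv by auto
  have s2: "\<forall>y\<in>set (map (\<lambda>x. x+2*k+2) d). 2*k+3 \<le> y \<and> y \<le> 2 * Suc n" using d(3) assms(1) by auto
  have d1: "distinct (map (\<lambda>x. 2*k+3-x) g)" using inj1 g(2) by (simp add: distinct_map)
  have d2: "distinct (map (\<lambda>x. x+2*k+2) d)" using d(2) by (simp add: distinct_map inj_on_def)
  have "distinct (fm k g d)" unfolding fm_def distinct_append
  proof (intro conjI)
    show "set (map (\<lambda>x. 2*k+3-x) g) \<inter> set ([2, 1] @ map (\<lambda>x. x+2*k+2) d) = {}"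
      using s1 s2 by fastforce
    show "set [2,1] \<inter> set (map (\<lambda>x. x+2*k+2) d) = {}" using s2 by fastforce
  qed (use d1 d2 in auto)
  moreover have "set (fm k g d) \<subseteq> {1..2 * Suc n}"
  proof
    fix y assume "y \<in> set (fm k g d)"
    then have "y \<in> set (map (\<lambda>x. 2*k+3-x) g) \<or> y \<in> set [2,1] \<or> y \<in> set (map (\<lambda>x. x+2*k+2) d)"
      unfolding fm_def by (simp only: set_append Un_iff)
    then show "y \<in> {1..2 * Suc n}"
    proof (elim disjE)
      assume "y \<in> set (map (\<lambda>x. 2*k+3-x) g)"
      then have "3 \<le> y \<and> y \<le> 2*k+2" using s1 by blast
      then show ?thesis using assms(1) by simp
    next
      assume "y \<in> set (map (\<lambda>x. x+2*k+2) d)"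
      then have "2*k+3 \<le> y \<and> y \<le> 2 * Suc n" using s2 by blast
      then show ?thesis by simp
    qed auto
  qed
  moreover have "length (fm k g d) = 2 * Suc n" using g(1) d(1) assms(1) by simp
  ultimately have "is_perm (2 * Suc n) (fm k g d)" by (intro perm_intro)
  moreover have "dumont1_cond (fm k g d)" using fm_dumont[OF g(1) gv dv] g(4) d(4) by blast
  moreover have "\<not> contains_pattern (fm k g d) [4,2,1,3]" using fm_pat[OF g(1) gv dv] g(5) d(5) by blast
  ultimately show ?thesis unfolding mem_av by blast
qed


lemma fm_inj:
  assumes "length g = 2*k" "length g' = 2*k" "\<forall>x\<in>set g. x\<le>2*k" "\<forall>x\<in>set g'. x\<le>2*k"
    "fm k g d = fm k g' d'"
  shows "g = g' \<and> d = d'"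
proof -
  have "map (\<lambda>x. 2*k+3-x) g = map (\<lambda>x. 2*k+3-x) g' \<and> map (\<lambda>x. x+2*k+2) d = map (\<lambda>x. x+2*k+2) d'"
    using assms(1,2,5) unfolding fm_def by (simp add: append_eq_append_conv)
  moreover have "inj_on (\<lambda>x. 2*k+3-x) (set g \<union> set g')"
  proof (rule inj_onI)
    fix x y assume h: "x \<in> set g \<union> set g'" "y \<in> set g \<union> set g'" "2*k+3-x = 2*k+3-y"
    then have "x \<le> 2*k" "y \<le> 2*k" using assms(3,4) by auto
    then show "x = y" using h(3) by arith
  qed
  moreover have "inj_on (\<lambda>x. x+2*k+2) (set d \<union> set d')" by (intro inj_onI) simp
  ultimately show ?thesis by (simp add: inj_on_map_eq_map)
qed

lemma fm_at2:
  assumes "length g = 2*k'" "\<forall>x\<in>set g. 1\<le>x \<and> x\<le>2*k'" "\<forall>x\<in>set d. 1 \<le> x"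
   "2*k < length g + 2 + length d"
  shows "fm k' g d ! (2*k) = 2 \<longleftrightarrow> k = k'"
proof -
  have "fm k' g d ! (2*k) = (if 2*k<2*k' then 2*k'+3-g!(2*k) else if 2*k=2*k' then 2 else if 2*k=2*k'+1 then 1
           else d!(2*k-2*k'-2)+2*k'+2)" using fm_nth[OF assms(1) assms(4)] .
  moreover have "2*k<2*k' \<Longrightarrow> g!(2*k) \<le> 2*k'" using assms(1,2) nth_mem by (metis)
  moreover have "\<not> 2*k<2*k' \<Longrightarrow> 2*k \<noteq> 2*k' \<Longrightarrow> 2*k \<noteq> 2*k'+1 \<Longrightarrow> 1 \<le> d!(2*k-2*k'-2)"
  proof -
    assume "\<not> 2*k<2*k'" "2*k \<noteq> 2*k'" "2*k \<noteq> 2*k'+1"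
    then have "2*k-2*k'-2 < length d" using assms(1,4) by simp
    then show ?thesis using assms(3) nth_mem by blast
  qed
  ultimately show ?thesis by (auto split: if_splits)
qed

lemma fm_surj:
  assumes "p \<in> dumont1_avoid (Suc n) {[4,2,1,3]}"
  shows "\<exists>k\<le>n. \<exists>g\<in>dumont1_avoid k {[1,3,4,2]}. \<exists>d\<in>dumont1_avoid (n-k) {[4,2,1,3]}. p = fm k g d"
proof -
  have P: "length p = 2*n+2" "distinct p" "set p = {1..2*n+2}" and D: "dumont1_cond p"
    and N: "\<not> contains_pattern p [4,2,1,3]"
    using assms unfolding mem_av is_perm_def by auto
  have Di: "(even (p ! i) \<longrightarrow> i + 1 < length p \<and> p ! i > p ! (i + 1)) \<and>
        (odd (p ! i) \<longrightarrow> i + 1 = length p \<or> p ! i < p ! (i + 1))" if "i < length p" for i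
    using D that unfolding dumont1_cond_def by blast
  have "2 \<in> set p" using P(3) by auto
  then obtain j where j: "j < length p" "p ! j = 2" by (metis in_set_conv_nth)
  have j1: "j + 1 < length p" "p ! (j+1) < 2" using Di[OF j(1)] j(2) by auto
  have "p ! (j+1) \<ge> 1" using P(3) nth_mem[OF j1(1)] by auto
  then have j2: "p ! (j+1) = 1" using j1 by linarith
  define a where "a = take j p"
  define b where "b = drop (j+2) p"
  have pe: "p = a @ [2,1] @ b"
  proof -
    have "p = take j p @ p!j # drop (Suc j) p" using id_take_nth_drop[OF j(1)] .
    moreover have "drop (Suc j) p = p!(j+1) # drop (j+2) p" using Cons_nth_drop_Suc[OF j1(1)] by simp
    ultimately show ?thesis unfolding a_def b_def using j(2) j2 by simp
  qed
  have la: "length a = j" using j unfolding a_def by simp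
  have lb: "length b = 2*n - j" using j1 P(1) unfolding b_def by simp
  have dist: "distinct (a @ [2,1] @ b)" using P(2) pe by simp
  have setp: "set a \<union> {1,2} \<union> set b = {1..2*n+2}" using P(3) pe by auto
  have n12: "1 \<notin> set a" "2 \<notin> set a" "1 \<notin> set b" "2 \<notin> set b" "set a \<inter> set b = {}"
    using dist by auto
  have av: "3 \<le> x \<and> x \<le> 2*n+2" if x: "x \<in> set a" for x
  proof -
    have "x \<in> {1..2*n+2}" using setp x by blast
    moreover have "x \<noteq> 1" "x \<noteq> 2" using n12 x by auto
    ultimately show ?thesis by auto
  qed
  have bv: "3 \<le> x \<and> x \<le> 2*n+2" if x: "x \<in> set b" for x
  proof -
    have "x \<in> {1..2*n+2}" using setp x by blast
    moreover have "x \<noteq> 1" "x \<noteq> 2" using n12 x by auto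
    ultimately show ?thesis by auto
  qed
  have sep: "x < y" if xy: "x \<in> set a" "y \<in> set b" for x y
  proof (rule ccontr)
    assume "\<not> x < y"
    moreover have "x \<noteq> y" using dist xy by auto
    ultimately have yx: "y < x" by linarith
    obtain u where u: "u < j" "a ! u = x" using xy(1) la by (metis in_set_conv_nth)
    obtain v where v: "v < length b" "b ! v = y" using xy(2) by (metis in_set_conv_nth)
    have pu: "p ! u = x" using u unfolding a_def by simp
    have pv: "p ! (j+2+v) = y" using v j1 unfolding b_def by simp
    have "j+2+v < length p" using v lb P(1) j1 by simp
    then have "contains_pattern p [4,2,1,3]" unfolding c4213
      using u pu pv j2 j(2) yx bv[OF xy(2)]
      by (intro exI[of _ u] exI[of _ j] exI[of _ "j+1"] exI[of _ "j+2+v"]) auto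
    then show False using N by blast
  qed
  have da: "distinct a" and db: "distinct b" using dist by auto
  have aub: "x \<le> j+2" if x: "x \<in> set a" for x
  proof -
    have "{3..x} \<subseteq> set a"
    proof
      fix z assume z: "z \<in> {3..x}"
      then have "z \<in> set a \<union> {1,2} \<union> set b" using setp av[OF x] by auto
      moreover have "z \<notin> set b" using sep[OF x] z by fastforce
      ultimately show "z \<in> set a" using z by auto
    qed
    then have "card {3..x} \<le> card (set a)" by (intro card_mono) auto
    then show ?thesis using distinct_card[OF da] la by simp
  qed
  have blb: "j+3 \<le> y" if y: "y \<in> set b" for y
  proof -
    have "{y..2*n+2} \<subseteq> set b"
    proof
      fix z assume z: "z \<in> {y..2*n+2}"
      then have "z \<in> set a \<union> {1,2} \<union> set b" using setp bv[OF y] by auto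
      moreover have "z \<notin> set a" using sep[OF _ y] z by fastforce
      ultimately show "z \<in> set b" using z bv[OF y] by auto
    qed
    then have "card {y..2*n+2} \<le> card (set b)" by (intro card_mono) auto
    then show ?thesis using distinct_card[OF db] lb j1 P(1) by simp
  qed
  have seta: "set a = {3..j+2}"
  proof -
    have "set a \<subseteq> {3..j+2}" using av aub by auto
    moreover have "card (set a) = card {3..j+2}" using distinct_card[OF da] la by simp
    ultimately show ?thesis using card_subset_eq[of "{3..j+2}" "set a"] by auto
  qed
  have jev: "even j"
  proof (cases "j = 0")
    case False
    then have "j+2 \<in> set a" using seta by auto
    then obtain u where u: "u < j" "a ! u = j+2" using la by (metis in_set_conv_nth)
    have pu: "p ! u = j+2" using u unfolding a_def by simp
    have "p ! (u+1) < j+2"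
    proof (cases "u+1 < j")
      case True
      then have "p ! (u+1) = a ! (u+1)" unfolding a_def by simp
      moreover have "a ! (u+1) \<in> set a" using True la by simp
      moreover have "a ! (u+1) \<noteq> a ! u" using da True la u(1) by (simp add: nth_eq_iff_index_eq)
      ultimately show ?thesis using aub u(2) by fastforce
    next
      case False
      then have "u+1 = j" using u by simp
      then show ?thesis using j(2) by simp
    qed
    then show ?thesis using Di[of u] u j1 pu by auto
  qed simp
  then obtain k where k: "j = 2*k" by (metis evenE)
  have kn: "k \<le> n" using k j1 P(1) by simp
  define g where "g = map (\<lambda>x. 2*k+3-x) a"
  define d where "d = map (\<lambda>x. x-(2*k+2)) b"
  have ga: "map (\<lambda>x. 2*k+3-x) g = a" unfolding g_def using seta k by (auto intro!: map_idI)
  have db': "map (\<lambda>x. x+2*k+2) d = b" unfolding d_def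
    unfolding map_map comp_def
  proof (rule map_idI)
    fix x assume "x \<in> set b"
    then have "x \<ge> 2*k+3" using blb k by auto
    then show "x - (2*k+2) + 2*k+2 = x" by arith
  qed
  have pf: "p = fm k g d" unfolding fm_def ga db' using pe .
  have lg: "length g = 2*k" using la k unfolding g_def by simp
  have gv: "\<forall>x\<in>set g. 1\<le>x \<and> x\<le>2*k" unfolding g_def using seta k by auto
  have dv: "\<forall>x\<in>set d. 1 \<le> x \<and> x \<le> 2*(n-k)" unfolding d_def using blb bv k by fastforce
  have "inj_on (\<lambda>x. 2*k+3-x) (set a)"
  proof (rule inj_onI)
    fix x y assume h: "x \<in> set a" "y \<in> set a" "2*k+3-x = 2*k+3-y"
    then have "x \<le> 2*k+2" "y \<le> 2*k+2" using aub k by auto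
    then show "x = y" using h(3) by arith
  qed
  then have dg: "distinct g" unfolding g_def using da by (simp add: distinct_map)
  have "inj_on (\<lambda>x. x-(2*k+2)) (set b)"
  proof (rule inj_onI)
    fix x y assume h: "x \<in> set b" "y \<in> set b" "x-(2*k+2) = y-(2*k+2)"
    then have "x \<ge> 2*k+3" "y \<ge> 2*k+3" using blb k by auto
    then show "x = y" using h(3) by arith
  qed
  then have dd: "distinct d" unfolding d_def using db by (simp add: distinct_map)
  have ld: "length d = 2*(n-k)" unfolding d_def using lb k by simp
  have dv1: "\<forall>x\<in>set d. 1 \<le> x" using dv by auto
  have C: "dumont1_cond g \<and> dumont1_cond d" using fm_dumont[OF lg gv dv1] D pf by simp
  have C2: "\<not> contains_pattern g [1,3,4,2] \<and> \<not> contains_pattern d [4,2,1,3]"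
    using fm_pat[OF lg gv dv1] N pf by simp
  have "set g \<subseteq> {1..2*k}" using gv by auto
  then have "g \<in> dumont1_avoid k {[1,3,4,2]}" unfolding mem_av using perm_intro[OF lg dg] C C2 by blast
  moreover have "set d \<subseteq> {1..2*(n-k)}" using dv by auto
  then have "d \<in> dumont1_avoid (n-k) {[4,2,1,3]}" unfolding mem_av using perm_intro[OF ld dd] C C2 by blast
  ultimately show ?thesis using kn pf by blast
qed



unbundle fps_syntax

lemma fin_av: "finite (dumont1_avoid n T)"
proof -
  have "dumont1_avoid n T \<subseteq> {xs. set xs \<subseteq> {1..2*n} \<and> length xs = 2*n}"
    unfolding dumont1_avoid_def is_perm_def by auto
  then show ?thesis using finite_lists_length_eq[of "{1..2*n}" "2*n"] finite_subset by blast
qed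

lemma av0: "dumont1_avoid 0 {[4,2,1,3]} = {[]}"
proof -
  have "\<not> contains_pattern [] [4,2,1,3]" unfolding c4213 by simp
  then show ?thesis unfolding set_eq_iff mem_av by (auto simp: is_perm_def dumont1_cond_def)
qed

lemma count:
  "card (dumont1_avoid (Suc n) {[4,2,1,3]}) =
    (\<Sum>k\<le>n. card (dumont1_avoid k {[1,3,4,2]}) * card (dumont1_avoid (n-k) {[4,2,1,3]}))"
proof -
  define S where "S k = (\<lambda>(g,d). fm k g d) ` (dumont1_avoid k {[1,3,4,2]} \<times> dumont1_avoid (n-k) {[4,2,1,3]})" for k
  have eq: "dumont1_avoid (Suc n) {[4,2,1,3]} = (\<Union>k\<in>{..n}. S k)"
  proof
    show "dumont1_avoid (Suc n) {[4,2,1,3]} \<subseteq> (\<Union>k\<in>{..n}. S k)"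
    proof
      fix p assume "p \<in> dumont1_avoid (Suc n) {[4,2,1,3]}"
      from fm_surj[OF this] obtain k g d where "k \<le> n" "g \<in> dumont1_avoid k {[1,3,4,2]}"
        "d \<in> dumont1_avoid (n-k) {[4,2,1,3]}" "p = fm k g d" by blast
      then show "p \<in> (\<Union>k\<in>{..n}. S k)" unfolding S_def by force
    qed
  next
    show "(\<Union>k\<in>{..n}. S k) \<subseteq> dumont1_avoid (Suc n) {[4,2,1,3]}"
      unfolding S_def using fm_in by force
  qed
  have gprops: "length g = 2*k \<and> (\<forall>x\<in>set g. 1\<le>x \<and> x\<le>2*k)" if "g \<in> dumont1_avoid k {[1,3,4,2]}" for g k
    using that unfolding mem_av is_perm_def by auto
  have dprops: "length d = 2*(n-k) \<and> (\<forall>x\<in>set d. 1\<le>x)" if "d \<in> dumont1_avoid (n-k) {[4,2,1,3]}" for d k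
    using that unfolding mem_av is_perm_def by auto
  have inj: "inj_on (\<lambda>(g,d). fm k g d) (dumont1_avoid k {[1,3,4,2]} \<times> dumont1_avoid (n-k) {[4,2,1,3]})" for k
  proof (rule inj_onI, clarify)
    fix g d g' d' assume h: "g \<in> dumont1_avoid k {[1,3,4,2]}" "d \<in> dumont1_avoid (n-k) {[4,2,1,3]}"
      "g' \<in> dumont1_avoid k {[1,3,4,2]}" "d' \<in> dumont1_avoid (n-k) {[4,2,1,3]}" "fm k g d = fm k g' d'"
    show "g = g' \<and> d = d'" using fm_inj[OF _ _ _ _ h(5)] gprops[OF h(1)] gprops[OF h(3)] by auto
  qed
  have disj: "S k1 \<inter> S k2 = {}" if "k1 \<le> n" "k2 \<le> n" "k1 \<noteq> k2" for k1 k2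
  proof (rule ccontr)
    assume "S k1 \<inter> S k2 \<noteq> {}"
    then obtain g d g' d' where h: "g \<in> dumont1_avoid k1 {[1,3,4,2]}" "d \<in> dumont1_avoid (n-k1) {[4,2,1,3]}"
      "g' \<in> dumont1_avoid k2 {[1,3,4,2]}" "d' \<in> dumont1_avoid (n-k2) {[4,2,1,3]}" "fm k1 g d = fm k2 g' d'"
      unfolding S_def by auto
    have l: "2*k1 < length g + 2 + length d" using gprops[OF h(1)] dprops[OF h(2)] by simp
    have "fm k1 g d ! (2*k1) = 2" using fm_at2[of g k1 d k1] gprops[OF h(1)] dprops[OF h(2)] l by simp
    moreover have "2*k1 < length g' + 2 + length d'" using gprops[OF h(3)] dprops[OF h(4)] that by simp
    ultimately have "k1 = k2" using fm_at2[of g' k2 d' k1] gprops[OF h(3)] dprops[OF h(4)] h(5) by simp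
    then show False using that by simp
  qed
  have finS: "finite (S k)" for k unfolding S_def using fin_av by simp
  have "card (\<Union>k\<in>{..n}. S k) = (\<Sum>k\<le>n. card (S k))"
    by (rule card_UN_disjoint) (use finS disj in auto)
  also have "\<dots> = (\<Sum>k\<le>n. card (dumont1_avoid k {[1,3,4,2]}) * card (dumont1_avoid (n-k) {[4,2,1,3]}))"
  proof (intro sum.cong refl)
    fix k
    show "card (S k) = card (dumont1_avoid k {[1,3,4,2]}) * card (dumont1_avoid (n-k) {[4,2,1,3]})"
      unfolding S_def by (subst card_image[OF inj]) (rule card_cartesian_product)
  qed
  finally show ?thesis using eq by simp
qed

theorem lemma3p3:
  fixes A B :: "rat fps"
  assumes "A = Abs_fps (\<lambda>n. of_nat (card (dumont1_avoid n {[4,2,1,3]})))"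
      and "B = Abs_fps (\<lambda>n. of_nat (card (dumont1_avoid n {[1,3,4,2]})))"
  shows "A = inverse (1 - fps_X * B)"
proof -
  have "A = 1 + fps_X * (B * A)"
  proof (rule fps_ext)
    fix m
    show "A $ m = (1 + fps_X * (B * A)) $ m"
    proof (cases m)
      case 0
      have "card (dumont1_avoid 0 {[4,2,1,3]}) = 1" using av0 by simp
      then show ?thesis using assms 0 by simp
    next
      case (Suc n)
      have "(1 + fps_X * (B * A)) $ m = (B * A) $ n" using Suc by simp
      also have "\<dots> = (\<Sum>i=0..n. B$i * A$(n-i))" by (rule fps_mult_nth)
      also have "\<dots> = of_nat (\<Sum>k\<le>n. card (dumont1_avoid k {[1,3,4,2]}) * card (dumont1_avoid (n-k) {[4,2,1,3]}))"
        using assms by (simp add: atLeast0AtMost)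
      also have "\<dots> = A $ m" using assms Suc count by simp
      finally show ?thesis by simp
    qed
  qed
  then have "(1 - fps_X * B) * A = 1" by (simp add: algebra_simps)
  then show ?thesis by (rule fps_inverse_unique[symmetric])
qed

end
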